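(* With the setting in the context, for all $s\in\mathrm{hom}(C,G)_{-1}$ and $v\in\mathrm{hom}(C,G)^1$, $$\sum_{t\in\mathrm{hom}(C,G)^{-1}}\chi_s(t)A_t=\prod_n\prod_{x\in K_n}\sum_{g\in G_{n+1}}\chi_s(gx^* )A_{gx^*},\qquad \sum_{m\in\mathrm{hom}(C,G)_1}\chi_m(v)B_m=\prod_n\prod_{x\in K_n}\sum_{r\in\widehat{G}_{n-1}}\chi_{rx_*}(v)B_{rx_*}.$$
   Context: $(C_\bullet,\partial^C_\bullet)$ is a chain complex with each $C_n$ free abelian on a finite set $K_n$, $K_n\ne\emptyset$ for finitely many $n$; $(G_\bullet,\partial^G_\bullet)$ is a chain complex of finite abelian groups, $\widehat{G}_k=\mathrm{Hom}(G_k,U(1))$. $\mathrm{hom}(C,G)^p=\prod_n\mathrm{Hom}(C_n,G_{n-p})$ with $(\delta^pf)_n=f_{n-1}\partial^C_n-(-1)^p\partial^G_{n-p}f_n$. $\mathrm{hom}(C,G)_p=\mathrm{Hom}(\mathrm{hom}(C,G)^p,U(1))$ (written additively), $\chi_m(f)=m(f)$, $\delta_1m=m\circ\delta^0$. $\mathcal H=\bigotimes_n\bigotimes_{x\in K_n}\mathbb C[G_n]$ with orthonormal basis $|f\rangle$, $f\in\mathrm{hom}(C,G)^0$; $P_t|f\rangle=|f+t\rangle$, $Q_m|f\rangle=\chi_m(f)|f\rangle$; $A_t=P_{\delta^{-1}t}$ ($t\in\mathrm{hom}(C,G)^{-1}$), $B_m=Q_{\delta_1m}$ ($m\in\mathrm{hom}(C,G)_1$).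 For $x\in K_n$, $g\in G_{n-p}$, $gx^*\in\mathrm{hom}(C,G)^p$ has $n$-th component sending $x\mapsto g$ and other elements of $K_n$ to $0$, other components $0$; for $r\in\widehat G_{n-p}$, $rx_*\in\mathrm{hom}(C,G)_p$ is $rx_*(f)=r(f_n(x))$. *)

theory Defs
  imports Complex_Main
begin

text \<open>
  Chain complex C: C_n is free abelian on the finite set K n; the boundary
  is given by its integer matrix dC n x y = coefficient of y (in K (n-1)) in
  the boundary of x (in K n).
  Chain complex G: each G k is a finite subgroup of a common abelian group
  type 'g; dG k is the boundary G k to G (k-1).
  Elements of hom(C,G)^p are functions f n x, with f n x in G (n-p) for
  x in K n (Hom(C_n, G_(n-p)) = maps K n to G (n-p), by freeness), and
  f n x = 0 for x not in K n (extensionality).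
  U(1) is the complex unit circle, written multiplicatively.
\<close>

type_synonym ('k,'g) cochain = "int \<Rightarrow> 'k \<Rightarrow> 'g"
type_synonym ('k,'g) vec = "('k,'g) cochain \<Rightarrow> complex"
type_synonym ('k,'g) op = "('k,'g) vec \<Rightarrow> ('k,'g) vec"

definition zsmult :: "int \<Rightarrow> 'a::ab_group_add \<Rightarrow> 'a" where
  "zsmult k g = (\<Sum>i<nat k. g) - (\<Sum>i<nat (- k). g)"

definition setting ::
  "(int \<Rightarrow> 'k set) \<Rightarrow> (int \<Rightarrow> 'k \<Rightarrow> 'k \<Rightarrow> int) \<Rightarrow>
   (int \<Rightarrow> 'g::ab_group_add set) \<Rightarrow> (int \<Rightarrow> 'g \<Rightarrow> 'g) \<Rightarrow> bool" where
  "setting K dC G dG \<longleftrightarrow>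
     (\<forall>n. finite (K n)) \<and> finite {n. K n \<noteq> {}} \<and>
     (\<forall>n x z. x \<in> K n \<longrightarrow> z \<in> K (n - 2) \<longrightarrow>
        (\<Sum>y\<in>K (n - 1). dC n x y * dC (n - 1) y z) = 0) \<and>
     (\<forall>k. finite (G k) \<and> 0 \<in> G k \<and>
        (\<forall>g\<in>G k. \<forall>h\<in>G k. g + h \<in> G k) \<and> (\<forall>g\<in>G k. - g \<in> G k)) \<and>
     (\<forall>k. \<forall>g\<in>G k. dG k g \<in> G (k - 1)) \<and>
     (\<forall>k. \<forall>g\<in>G k. \<forall>h\<in>G k. dG k (g + h) = dG k g + dG k h) \<and>
     (\<forall>k. \<forall>g\<in>G k. dG (k - 1) (dG k g) = 0)"

definition cochains :: "(int \<Rightarrow> 'k set) \<Rightarrow> (int \<Rightarrow> 'g::zero set) \<Rightarrow> int \<Rightarrow> ('k,'g) cochain set" where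
  "cochains K G p = {f. \<forall>n x. (x \<in> K n \<longrightarrow> f n x \<in> G (n - p)) \<and> (x \<notin> K n \<longrightarrow> f n x = 0)}"

definition cobdry ::
  "(int \<Rightarrow> 'k set) \<Rightarrow> (int \<Rightarrow> 'k \<Rightarrow> 'k \<Rightarrow> int) \<Rightarrow> (int \<Rightarrow> 'g::ab_group_add \<Rightarrow> 'g) \<Rightarrow>
   int \<Rightarrow> ('k,'g) cochain \<Rightarrow> ('k,'g) cochain" where
  "cobdry K dC dG p f = (\<lambda>n x. if x \<in> K n then
      (\<Sum>y\<in>K (n - 1). zsmult (dC n x y) (f (n - 1) y))
        - (if even p then dG (n - p) (f n x) else - dG (n - p) (f n x))
    else 0)"

text \<open>hom(C,G)_p = Hom(hom(C,G)^p, U(1)), characters, extended by 1 outside\<close>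
definition chars :: "(int \<Rightarrow> 'k set) \<Rightarrow> (int \<Rightarrow> 'g::ab_group_add set) \<Rightarrow> int \<Rightarrow>
   (('k,'g) cochain \<Rightarrow> complex) set" where
  "chars K G p = {m. (\<forall>f\<in>cochains K G p. cmod (m f) = 1) \<and>
     (\<forall>f\<in>cochains K G p. \<forall>g\<in>cochains K G p. m (\<lambda>n x. f n x + g n x) = m f * m g) \<and>
     (\<forall>f. f \<notin> cochains K G p \<longrightarrow> m f = 1)}"

definition dual_grp :: "(int \<Rightarrow> 'g::ab_group_add set) \<Rightarrow> int \<Rightarrow> ('g \<Rightarrow> complex) set" where
  "dual_grp G k = {r. (\<forall>g\<in>G k. cmod (r g) = 1) \<and>
     (\<forall>g\<in>G k. \<forall>h\<in>G k. r (g + h) = r g * r h) \<and> (\<forall>g. g \<notin> G k \<longrightarrow> r g = 1)}"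

definition dual_cobdry ::
  "(int \<Rightarrow> 'k set) \<Rightarrow> (int \<Rightarrow> 'k \<Rightarrow> 'k \<Rightarrow> int) \<Rightarrow> (int \<Rightarrow> 'g::ab_group_add set) \<Rightarrow>
   (int \<Rightarrow> 'g \<Rightarrow> 'g) \<Rightarrow> (('k,'g) cochain \<Rightarrow> complex) \<Rightarrow> (('k,'g) cochain \<Rightarrow> complex)" where
  "dual_cobdry K dC G dG m = (\<lambda>f. if f \<in> cochains K G 0 then m (cobdry K dC dG 0 f) else 1)"

text \<open>g x^*  and  r x_*\<close>
definition upper_elem :: "int \<Rightarrow> 'k \<Rightarrow> 'g::zero \<Rightarrow> ('k,'g) cochain" where
  "upper_elem n x g = (\<lambda>n' y. if n' = n \<and> y = x then g else 0)"

definition lower_elem :: "(int \<Rightarrow> 'k set) \<Rightarrow> (int \<Rightarrow> 'g::ab_group_add set) \<Rightarrow> int \<Rightarrow>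
   int \<Rightarrow> 'k \<Rightarrow> ('g \<Rightarrow> complex) \<Rightarrow> (('k,'g) cochain \<Rightarrow> complex)" where
  "lower_elem K G p n x r = (\<lambda>f. if f \<in> cochains K G p then r (f n x) else 1)"

text \<open>The Hilbert space: complex functions on the basis hom(C,G)^0\<close>
definition Hspace :: "(int \<Rightarrow> 'k set) \<Rightarrow> (int \<Rightarrow> 'g::ab_group_add set) \<Rightarrow> ('k,'g) vec set" where
  "Hspace K G = {\<psi>. \<forall>f. f \<notin> cochains K G 0 \<longrightarrow> \<psi> f = 0}"

text \<open>P_t |f> = |f + t>,  Q_m |f> = chi_m(f) |f>\<close>
definition Pop :: "('k,'g::ab_group_add) cochain \<Rightarrow> ('k,'g) op" where
  "Pop t \<psi> = (\<lambda>f. \<psi> (\<lambda>n x. f n x - t n x))"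

definition Qop :: "(('k,'g::ab_group_add) cochain \<Rightarrow> complex) \<Rightarrow> ('k,'g) op" where
  "Qop m \<psi> = (\<lambda>f. m f * \<psi> f)"

definition Aop :: "(int \<Rightarrow> 'k set) \<Rightarrow> (int \<Rightarrow> 'k \<Rightarrow> 'k \<Rightarrow> int) \<Rightarrow> (int \<Rightarrow> 'g::ab_group_add \<Rightarrow> 'g) \<Rightarrow>
   ('k,'g) cochain \<Rightarrow> ('k,'g) op" where
  "Aop K dC dG t = Pop (cobdry K dC dG (-1) t)"

definition Bop :: "(int \<Rightarrow> 'k set) \<Rightarrow> (int \<Rightarrow> 'k \<Rightarrow> 'k \<Rightarrow> int) \<Rightarrow> (int \<Rightarrow> 'g::ab_group_add set) \<Rightarrow>
   (int \<Rightarrow> 'g \<Rightarrow> 'g) \<Rightarrow> (('k,'g) cochain \<Rightarrow> complex) \<Rightarrow> ('k,'g) op" where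
  "Bop K dC G dG m = Qop (dual_cobdry K dC G dG m)"

definition op_sum :: "'i set \<Rightarrow> ('i \<Rightarrow> complex) \<Rightarrow> ('i \<Rightarrow> ('k,'g) op) \<Rightarrow> ('k,'g) op" where
  "op_sum I c Op = (\<lambda>\<psi> f. \<Sum>i\<in>I. c i * Op i \<psi> f)"

definition op_prod :: "'i set \<Rightarrow> ('i \<Rightarrow> ('k,'g) op) \<Rightarrow> ('k,'g) op" where
  "op_prod I Op = Finite_Set.fold (\<lambda>i acc. Op i \<circ> acc) id I"

end

theory Submission imports Defs "HOL-Library.FuncSet" begin

lemma setting_facts:
  assumes "setting K dC G dG"
  shows "finite (K n)" "finite {n. K n \<noteq> {}}" "0 \<in> G k" "finite (G k)"
    "\<And>g h. g \<in> G k \<Longrightarrow> h \<in> G k \<Longrightarrow> g + h \<in> G k"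
    "\<And>g. g \<in> G k \<Longrightarrow> - g \<in> G k"
    "\<And>g. g \<in> G k \<Longrightarrow> dG k g \<in> G (k - 1)"
    "\<And>g h. g \<in> G k \<Longrightarrow> h \<in> G k \<Longrightarrow> dG k (g + h) = dG k g + dG k h"
  using assms unfolding setting_def by auto

lemma dG_zero: assumes "setting K dC G dG" shows "dG k 0 = 0"
proof -
  have "dG k (0 + 0) = dG k 0 + dG k 0" using setting_facts(3,8)[OF assms] by blast
  thus ?thesis by simp
qed

lemma S_finite: assumes "setting K dC G dG" shows "finite {(n, x). x \<in> K n}"
proof -
  have "{(n, x). x \<in> K n} = Sigma {n. K n \<noteq> {}} K" by auto
  thus ?thesis using setting_facts(1,2)[OF assms] by auto
qed

lemma zsmult_add: "zsmult k (a + b) = zsmult k a + zsmult k (b::'a::ab_group_add)"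
  unfolding zsmult_def by (simp add: sum.distrib algebra_simps)

lemma zsmult_zero: "zsmult k (0::'a::ab_group_add) = 0"
  unfolding zsmult_def by simp

lemma sum_const_in:
  assumes "0 \<in> A" "\<And>g h. g \<in> A \<Longrightarrow> h \<in> A \<Longrightarrow> g + h \<in> A" "g \<in> A"
  shows "(\<Sum>i<(n::nat). g) \<in> A"
  by (induction n) (auto intro: assms)

lemma zsmult_in:
  assumes "setting K dC G dG" "g \<in> G k"
  shows "zsmult j g \<in> G k"
proof -
  note F = setting_facts[OF assms(1)]
  have a: "(\<Sum>i<nat j. g) \<in> G k" by (rule sum_const_in[OF F(3) F(5) assms(2)])
  have b: "(\<Sum>i<nat (-j). g) \<in> G k" by (rule sum_const_in[OF F(3) F(5) assms(2)])
  have "(\<Sum>i<nat j. g) + - (\<Sum>i<nat (-j). g) \<in> G k" by (rule F(5)[OF a F(6)[OF b]])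
  thus ?thesis unfolding zsmult_def by simp
qed

lemma sum_in:
  assumes "0 \<in> A" "\<And>g h. g \<in> A \<Longrightarrow> h \<in> A \<Longrightarrow> g + h \<in> A" "\<And>i. i \<in> I \<Longrightarrow> f i \<in> A"
  shows "sum f I \<in> A"
  using assms(3)
  by (induction I rule: infinite_finite_induct) (auto intro: assms(1,2))

lemma cochainsI:
  "(\<And>n x. x \<in> K n \<Longrightarrow> f n x \<in> G (n - p)) \<Longrightarrow> (\<And>n x. x \<notin> K n \<Longrightarrow> f n x = 0) \<Longrightarrow> f \<in> cochains K G p"
  unfolding cochains_def by auto

lemma cochainsD:
  "f \<in> cochains K G p \<Longrightarrow> x \<in> K n \<Longrightarrow> f n x \<in> G (n - p)"
  "f \<in> cochains K G p \<Longrightarrow> x \<notin> K n \<Longrightarrow> f n x = 0"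
  unfolding cochains_def by auto

lemma cochains_add:
  assumes "setting K dC G dG" "a \<in> cochains K G p" "b \<in> cochains K G p"
  shows "(\<lambda>n x. a n x + b n x) \<in> cochains K G p"
proof (rule cochainsI)
  fix n x assume "x \<in> K n"
  then show "a n x + b n x \<in> G (n - p)"
    using setting_facts(5)[OF assms(1)] cochainsD(1)[OF assms(2)] cochainsD(1)[OF assms(3)] by blast
qed (use assms in \<open>simp add: cochainsD\<close>)

lemma cochains_zero:
  assumes "setting K dC G dG" shows "(\<lambda>n x. 0) \<in> cochains K G p"
  using setting_facts(3)[OF assms] by (auto intro!: cochainsI)

lemma upper_in:
  assumes "setting K dC G dG" "x \<in> K n" "g \<in> G (n - p)"
  shows "upper_elem n x g \<in> cochains K G p"
  using assms setting_facts(3)[OF assms(1)] unfolding upper_elem_def by (auto intro!: cochainsI)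

lemma cobdry_add:
  assumes "setting K dC G dG" "a \<in> cochains K G p" "b \<in> cochains K G p"
  shows "cobdry K dC dG p (\<lambda>n x. a n x + b n x)
       = (\<lambda>n x. cobdry K dC dG p a n x + cobdry K dC dG p b n x)"
proof (intro ext)
  fix n x
  show "cobdry K dC dG p (\<lambda>n x. a n x + b n x) n x = cobdry K dC dG p a n x + cobdry K dC dG p b n x"
  proof (cases "x \<in> K n")
    case True
    have "dG (n - p) (a n x + b n x) = dG (n - p) (a n x) + dG (n - p) (b n x)"
      using setting_facts(8)[OF assms(1)] cochainsD(1)[OF assms(2) True] cochainsD(1)[OF assms(3) True]
      by blast
    moreover have "(\<Sum>y\<in>K (n - 1). zsmult (dC n x y) (a (n - 1) y + b (n - 1) y))
      = (\<Sum>y\<in>K (n - 1). zsmult (dC n x y) (a (n - 1) y)) + (\<Sum>y\<in>K (n - 1). zsmult (dC n x y) (b (n - 1) y))"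
      by (simp add: zsmult_add sum.distrib)
    ultimately show ?thesis using True
      unfolding cobdry_def by (cases "even p") (simp_all add: algebra_simps)
  qed (simp add: cobdry_def)
qed

lemma cobdry_zero:
  assumes "setting K dC G dG"
  shows "cobdry K dC dG p (\<lambda>n x. 0) = (\<lambda>n x. 0)"
  unfolding cobdry_def by (intro ext) (simp add: zsmult_zero dG_zero[OF assms])

lemma cobdry_in:
  assumes "setting K dC G dG" "f \<in> cochains K G 0"
  shows "cobdry K dC dG 0 f \<in> cochains K G 1"
proof (rule cochainsI)
  note F = setting_facts[OF assms(1)]
  fix n x assume x: "x \<in> K n"
  have "(\<Sum>y\<in>K (n - 1). zsmult (dC n x y) (f (n - 1) y)) \<in> G (n - 1)"
  proof (rule sum_in[OF F(3) F(5)])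
    fix y assume "y \<in> K (n - 1)"
    then have "f (n - 1) y \<in> G (n - 1)" using cochainsD(1)[OF assms(2)] by fastforce
    thus "zsmult (dC n x y) (f (n - 1) y) \<in> G (n - 1)" by (rule zsmult_in[OF assms(1)])
  qed
  moreover have "dG n (f n x) \<in> G (n - 1)" using F(7) cochainsD(1)[OF assms(2) x] by fastforce
  ultimately have "(\<Sum>y\<in>K (n - 1). zsmult (dC n x y) (f (n - 1) y)) + - dG n (f n x) \<in> G (n - 1)"
    using F(5,6) by blast
  then show "cobdry K dC dG 0 f n x \<in> G (n - 1)"
    using x unfolding cobdry_def by simp
qed (simp add: cobdry_def)


definition CI :: "(int \<Rightarrow> 'k set) \<Rightarrow> (int \<Rightarrow> 'g::zero set) \<Rightarrow> int \<Rightarrow> (int \<times> 'k) set \<Rightarrow> ('k,'g) cochain set" where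
  "CI K G p I = {t \<in> cochains K G p. \<forall>n x. (n, x) \<notin> I \<longrightarrow> t n x = 0}"

lemma char_mult:
  "m \<in> chars K G p \<Longrightarrow> a \<in> cochains K G p \<Longrightarrow> b \<in> cochains K G p \<Longrightarrow>
   m (\<lambda>n x. a n x + b n x) = m a * m b"
  unfolding chars_def by blast

lemma char_norm: "m \<in> chars K G p \<Longrightarrow> a \<in> cochains K G p \<Longrightarrow> cmod (m a) = 1"
  unfolding chars_def by blast

lemma char_out: "m \<in> chars K G p \<Longrightarrow> a \<notin> cochains K G p \<Longrightarrow> m a = 1"
  unfolding chars_def by blast

lemma char_zero:
  assumes "setting K dC G dG" "m \<in> chars K G p"
  shows "m (\<lambda>n x. 0) = 1"
proof -
  have z: "(\<lambda>n x. 0) \<in> cochains K G p" by (rule cochains_zero[OF assms(1)])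
  have "m (\<lambda>n x. 0 + 0) = m (\<lambda>n x. 0) * m (\<lambda>n x. 0)" by (rule char_mult[OF assms(2) z z])
  moreover have "m (\<lambda>n x. 0) \<noteq> 0" using char_norm[OF assms(2) z] by auto
  ultimately show ?thesis by simp
qed

lemma op_sum_Pop_comm:
  "op_sum A c (\<lambda>a. Pop (p a)) (op_sum B d (\<lambda>b. Pop (q b)) \<psi>)
 = op_sum B d (\<lambda>b. Pop (q b)) (op_sum A c (\<lambda>a. Pop (p a)) \<psi>)"
proof (intro ext)
  fix f
  have "op_sum A c (\<lambda>a. Pop (p a)) (op_sum B d (\<lambda>b. Pop (q b)) \<psi>) f
     = (\<Sum>a\<in>A. \<Sum>b\<in>B. c a * d b * \<psi> (\<lambda>n x. f n x - p a n x - q b n x))"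
    unfolding op_sum_def Pop_def by (simp add: sum_distrib_left mult.assoc)
  also have "\<dots> = (\<Sum>b\<in>B. \<Sum>a\<in>A. d b * c a * \<psi> (\<lambda>n x. f n x - q b n x - p a n x))"
    by (subst sum.swap) (simp add: mult.commute diff_right_commute)
  also have "\<dots> = op_sum B d (\<lambda>b. Pop (q b)) (op_sum A c (\<lambda>a. Pop (p a)) \<psi>) f"
    unfolding op_sum_def Pop_def by (simp add: sum_distrib_left mult.assoc)
  finally show "op_sum A c (\<lambda>a. Pop (p a)) (op_sum B d (\<lambda>b. Pop (q b)) \<psi>) f
     = op_sum B d (\<lambda>b. Pop (q b)) (op_sum A c (\<lambda>a. Pop (p a)) \<psi>) f" .
qed

lemma OP1_comm:
  "(\<lambda>(n, x). op_sum (G (n + 1)) (\<lambda>g. s (upper_elem n x g)) (\<lambda>g. Aop K dC dG (upper_elem n x g))) i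
    ((\<lambda>(n, x). op_sum (G (n + 1)) (\<lambda>g. s (upper_elem n x g)) (\<lambda>g. Aop K dC dG (upper_elem n x g))) j \<phi>)
 = (\<lambda>(n, x). op_sum (G (n + 1)) (\<lambda>g. s (upper_elem n x g)) (\<lambda>g. Aop K dC dG (upper_elem n x g))) j
    ((\<lambda>(n, x). op_sum (G (n + 1)) (\<lambda>g. s (upper_elem n x g)) (\<lambda>g. Aop K dC dG (upper_elem n x g))) i \<phi>)"
  unfolding Aop_def
  by (cases i; cases j) (simp only: case_prod_conv, rule op_sum_Pop_comm)


lemma CI_empty: assumes "setting K dC G dG" shows "CI K G p {} = {\<lambda>n x. 0}"
  unfolding CI_def using cochains_zero[OF assms] by (auto simp: fun_eq_iff)

lemma CI_full: "CI K G p {(n, x). x \<in> K n} = cochains K G p"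
  unfolding CI_def by (auto dest: cochainsD(2))

lemma CI_bij:
  assumes S: "setting K dC G dG" and j: "x0 \<in> K n0" and nj: "(n0, x0) \<notin> I"
  shows "bij_betw (\<lambda>(g, t). (\<lambda>n x. upper_elem n0 x0 g n x + t n x))
           (G (n0 - p) \<times> CI K G p I) (CI K G p (insert (n0, x0) I))"
proof (rule bij_betw_byWitness[where f' = "\<lambda>t'. (t' n0 x0, \<lambda>n x. if (n, x) = (n0, x0) then 0 else t' n x)"])
  show "\<forall>a\<in>G (n0 - p) \<times> CI K G p I.
     (\<lambda>t'. (t' n0 x0, \<lambda>n x. if (n, x) = (n0, x0) then 0 else t' n x))
       ((\<lambda>(g, t). (\<lambda>n x. upper_elem n0 x0 g n x + t n x)) a) = a"
    using nj unfolding CI_def upper_elem_def by (auto simp: fun_eq_iff)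
  show "\<forall>a'\<in>CI K G p (insert (n0, x0) I).
     (\<lambda>(g, t). (\<lambda>n x. upper_elem n0 x0 g n x + t n x))
       ((\<lambda>t'. (t' n0 x0, \<lambda>n x. if (n, x) = (n0, x0) then 0 else t' n x)) a') = a'"
    unfolding CI_def upper_elem_def by (auto simp: fun_eq_iff)
  show "(\<lambda>(g, t). (\<lambda>n x. upper_elem n0 x0 g n x + t n x)) ` (G (n0 - p) \<times> CI K G p I)
        \<subseteq> CI K G p (insert (n0, x0) I)"
  proof safe
    fix g t assume g: "g \<in> G (n0 - p)" and t: "t \<in> CI K G p I"
    have "(\<lambda>n x. upper_elem n0 x0 g n x + t n x) \<in> cochains K G p"
      by (rule cochains_add[OF S upper_in[OF S j g]]) (use t in \<open>simp add: CI_def\<close>)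
    then show "(\<lambda>n x. upper_elem n0 x0 g n x + t n x) \<in> CI K G p (insert (n0, x0) I)"
      using t unfolding CI_def upper_elem_def by auto
  qed
  show "(\<lambda>t'. (t' n0 x0, \<lambda>n x. if (n, x) = (n0, x0) then 0 else t' n x)) ` CI K G p (insert (n0, x0) I)
        \<subseteq> G (n0 - p) \<times> CI K G p I"
  proof safe
    fix t' assume t': "t' \<in> CI K G p (insert (n0, x0) I)"
    then have c: "t' \<in> cochains K G p" unfolding CI_def by simp
    show "t' n0 x0 \<in> G (n0 - p)" by (rule cochainsD(1)[OF c j])
    have "(\<lambda>n x. if (n, x) = (n0, x0) then 0 else t' n x) \<in> cochains K G p"
      using c setting_facts(3)[OF S] by (auto intro!: cochainsI dest: cochainsD)
    then show "(\<lambda>n x. if (n, x) = (n0, x0) then 0 else t' n x) \<in> CI K G p I"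
      using t' unfolding CI_def by auto
  qed
qed

lemma part1_ind:
  assumes S: "setting K dC G dG" and s: "s \<in> chars K G (-1)"
    and fin: "finite I" and sub: "I \<subseteq> {(n, x). x \<in> K n}"
  shows "op_prod I (\<lambda>(n, x). op_sum (G (n + 1)) (\<lambda>g. s (upper_elem n x g)) (\<lambda>g. Aop K dC dG (upper_elem n x g))) \<psi>
    = (\<lambda>f. \<Sum>t\<in>CI K G (-1) I. s t * \<psi> (\<lambda>n x. f n x - cobdry K dC dG (-1) t n x))"
  using fin sub
proof (induction I rule: finite_induct)
  case empty
  show ?case unfolding op_prod_def
    by (simp add: CI_empty[OF S] char_zero[OF S s] cobdry_zero[OF S])
next
  case (insert j I)
  let ?OP = "\<lambda>(n, x). op_sum (G (n + 1)) (\<lambda>g. s (upper_elem n x g)) (\<lambda>g. Aop K dC dG (upper_elem n x g))"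
  let ?S = "{(n, x). x \<in> K n}"
  let ?d = "cobdry K dC dG (-1)"
  interpret cf: comp_fun_commute_on ?S "\<lambda>i acc. ?OP i \<circ> acc"
    by unfold_locales (auto simp: fun_eq_iff OP1_comm)
  obtain n0 x0 where j: "j = (n0, x0)" by (cases j)
  have x0: "x0 \<in> K n0" using insert.prems j by auto
  have nj: "(n0, x0) \<notin> I" using insert.hyps j by auto
  have IH: "op_prod I ?OP \<psi> = (\<lambda>f. \<Sum>t\<in>CI K G (-1) I. s t * \<psi> (\<lambda>n x. f n x - ?d t n x))"
    using insert by auto
  have "op_prod (insert j I) ?OP = ?OP j \<circ> op_prod I ?OP"
    unfolding op_prod_def using insert.prems insert.hyps by (simp add: cf.fold_insert)
  then have "op_prod (insert j I) ?OP \<psi> = ?OP j (op_prod I ?OP \<psi>)" by simp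
  also have "\<dots> = (\<lambda>f. \<Sum>t'\<in>CI K G (-1) (insert j I). s t' * \<psi> (\<lambda>n x. f n x - ?d t' n x))"
  proof (intro ext)
    fix f
    let ?u = "upper_elem n0 x0"
    let ?h = "\<lambda>(g, t). (\<lambda>n x. ?u g n x + t n x)"
    let ?H = "\<lambda>t'. s t' * \<psi> (\<lambda>n x. f n x - ?d t' n x)"
    have "?OP j (op_prod I ?OP \<psi>) f
        = (\<Sum>g\<in>G (n0 + 1). s (?u g) * (\<Sum>t\<in>CI K G (-1) I. s t * \<psi> (\<lambda>n x. f n x - ?d (?u g) n x - ?d t n x)))"
      unfolding IH j by (simp add: op_sum_def Aop_def Pop_def)
    also have "\<dots> = (\<Sum>g\<in>G (n0 + 1). \<Sum>t\<in>CI K G (-1) I. s (?u g) * s t * \<psi> (\<lambda>n x. f n x - ?d (?u g) n x - ?d t n x))"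
      by (simp add: sum_distrib_left mult.assoc)
    also have "\<dots> = (\<Sum>(g, t)\<in>G (n0 + 1) \<times> CI K G (-1) I. s (?u g) * s t * \<psi> (\<lambda>n x. f n x - ?d (?u g) n x - ?d t n x))"
      by (rule sum.cartesian_product)
    also have "\<dots> = (\<Sum>a\<in>G (n0 - (-1)) \<times> CI K G (-1) I. ?H (?h a))"
    proof (rule sum.cong)
      fix a assume a: "a \<in> G (n0 - (-1)) \<times> CI K G (-1) I"
      obtain g t where gt: "a = (g, t)" by (cases a)
      have g: "g \<in> G (n0 - (-1))" and t: "t \<in> cochains K G (-1)" using a gt by (auto simp: CI_def)
      have ug: "?u g \<in> cochains K G (-1)" by (rule upper_in[OF S x0 g])
      show "(case a of (g, t) \<Rightarrow> s (?u g) * s t * \<psi> (\<lambda>n x. f n x - ?d (?u g) n x - ?d t n x)) = ?H (?h a)"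
        unfolding gt using char_mult[OF s ug t] cobdry_add[OF S ug t]
        by (simp add: diff_diff_eq)
    qed simp
    also have "\<dots> = (\<Sum>t'\<in>CI K G (-1) (insert j I). ?H t')"
      unfolding j by (rule sum.reindex_bij_betw[OF CI_bij[OF S x0 nj]])
    finally show "?OP j (op_prod I ?OP \<psi>) f = (\<Sum>t'\<in>CI K G (-1) (insert j I). ?H t')" .
  qed
  finally show ?case .
qed


lemma qsum: "op_sum A c (\<lambda>a. Qop (m a)) \<psi> = (\<lambda>f. (\<Sum>a\<in>A. c a * m a f) * \<psi> f)"
  unfolding op_sum_def Qop_def by (simp add: sum_distrib_right mult.assoc)

lemma qprod:
  assumes OP: "\<And>i \<phi>. OP i \<phi> = (\<lambda>f. k i f * \<phi> f)" and fin: "finite I"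
  shows "op_prod I OP \<psi> = (\<lambda>f. (\<Prod>i\<in>I. k i f) * \<psi> f)"
  using fin
proof (induction I rule: finite_induct)
  case empty
  then show ?case unfolding op_prod_def by simp
next
  case (insert j I)
  interpret cf: comp_fun_commute "\<lambda>i acc. OP i \<circ> acc"
    by unfold_locales (simp add: fun_eq_iff OP mult.left_commute)
  have "op_prod (insert j I) OP = OP j \<circ> op_prod I OP"
    unfolding op_prod_def using insert.hyps by (simp add: cf.fold_insert)
  then have "op_prod (insert j I) OP \<psi> = OP j (op_prod I OP \<psi>)" by simp
  also have "\<dots> = OP j (\<lambda>f. (\<Prod>i\<in>I. k i f) * \<psi> f)" by (simp only: insert.IH)
  also have "\<dots> = (\<lambda>f. k j f * ((\<Prod>i\<in>I. k i f) * \<psi> f))" by (rule OP)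
  finally show ?case using insert.hyps by (simp add: mult.assoc)
qed

lemma dual_norm: "r \<in> dual_grp G k \<Longrightarrow> g \<in> G k \<Longrightarrow> cmod (r g) = 1"
  unfolding dual_grp_def by blast
lemma dual_mult: "r \<in> dual_grp G k \<Longrightarrow> g \<in> G k \<Longrightarrow> h \<in> G k \<Longrightarrow> r (g + h) = r g * r h"
  unfolding dual_grp_def by blast
lemma dual_out: "r \<in> dual_grp G k \<Longrightarrow> g \<notin> G k \<Longrightarrow> r g = 1"
  unfolding dual_grp_def by blast

lemma dual_zero:
  assumes S: "setting K dC G dG" and r: "r \<in> dual_grp G k"
  shows "r 0 = 1"
proof -
  have z: "0 \<in> G k" by (rule setting_facts(3)[OF S])
  have "r (0 + 0) = r 0 * r 0" by (rule dual_mult[OF r z z])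
  moreover have "r 0 \<noteq> 0" using dual_norm[OF r z] by auto
  ultimately show ?thesis by simp
qed

lemma dual_pow:
  assumes S: "setting K dC G dG" and r: "r \<in> dual_grp G k" and g: "g \<in> G k"
  shows "r (\<Sum>i<(n::nat). g) = r g ^ n"
proof (induction n)
  case 0 show ?case using dual_zero[OF S r] by simp
next
  case (Suc n)
  have a: "(\<Sum>i<n. g) \<in> G k" by (rule sum_const_in[OF setting_facts(3)[OF S] setting_facts(5)[OF S] g])
  have "r (\<Sum>i<Suc n. g) = r ((\<Sum>i<n. g) + g)" by simp
  also have "\<dots> = r g ^ n * r g" using dual_mult[OF r a g] Suc by simp
  finally show ?case by simp
qed

lemma dual_root:
  assumes S: "setting K dC G dG" and g: "g \<in> G k"
  shows "\<exists>d\<in>{1..card (G k)}. \<forall>r\<in>dual_grp G k. r g ^ d = 1"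
proof -
  let ?N = "card (G k)"
  let ?f = "\<lambda>i::nat. (\<Sum>j<i. g)"
  have fin: "finite (G k)" by (rule setting_facts(4)[OF S])
  have im: "?f ` {..?N} \<subseteq> G k"
    using sum_const_in[OF setting_facts(3)[OF S] setting_facts(5)[OF S] g] by auto
  have "\<not> inj_on ?f {..?N}"
  proof
    assume "inj_on ?f {..?N}"
    then have "card {..?N} \<le> card (G k)" using card_inj_on_le[OF _ im fin] by blast
    then show False by simp
  qed
  then obtain i j where ij: "i \<in> {..?N}" "j \<in> {..?N}" "i \<noteq> j" "?f i = ?f j"
    unfolding inj_on_def by blast
  obtain a b where ab: "a < b" "b \<le> ?N" "?f a = ?f b"
    using ij by (cases "i < j") (auto, metis linorder_neqE_nat)
  show ?thesis
  proof (intro bexI ballI)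
    fix r assume r: "r \<in> dual_grp G k"
    have rg: "r g \<noteq> 0" using dual_norm[OF r g] by auto
    have "r g ^ a = r g ^ b" using ab(3) dual_pow[OF S r g] by metis
    also have "\<dots> = r g ^ a * r g ^ (b - a)" using ab(1) by (simp add: power_add[symmetric])
    finally show "r g ^ (b - a) = 1" using rg by simp
  next
    show "b - a \<in> {1..?N}" using ab by auto
  qed
qed

lemma dual_finite:
  assumes S: "setting K dC G dG"
  shows "finite (dual_grp G k)"
proof -
  let ?B = "\<Union>d\<in>{1..card (G k)}. {z::complex. z ^ d = 1}"
  have fB: "finite ?B" by (auto intro!: finite_roots_unity)
  have "dual_grp G k \<subseteq> {r. \<forall>x. (x \<in> G k \<longrightarrow> r x \<in> ?B) \<and> (x \<notin> G k \<longrightarrow> r x = 1)}"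
  proof safe
    fix r x assume r: "r \<in> dual_grp G k"
    { assume x: "x \<in> G k"
      obtain d where "d \<in> {1..card (G k)}" "\<forall>r\<in>dual_grp G k. r x ^ d = 1" using dual_root[OF S x] by blast
      then show "r x \<in> ?B" using r by blast }
    { assume "x \<notin> G k" then show "r x = 1" using dual_out[OF r] by blast }
  qed
  then show ?thesis
    using finite_subset finite_set_of_finite_funs[OF setting_facts(4)[OF S] fB] by blast
qed


lemma restr_in:
  assumes S: "setting K dC G dG" and f: "f \<in> cochains K G p"
  shows "(\<lambda>n x. if (n, x) \<in> I then f n x else 0) \<in> cochains K G p"
  using f setting_facts(3)[OF S] by (auto intro!: cochainsI dest: cochainsD)

lemma char_decomp_ind:
  assumes S: "setting K dC G dG" and m: "m \<in> chars K G p" and f: "f \<in> cochains K G p"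
    and fin: "finite I" and sub: "I \<subseteq> {(n, x). x \<in> K n}"
  shows "m (\<lambda>n x. if (n, x) \<in> I then f n x else 0)
       = (\<Prod>i\<in>I. m (upper_elem (fst i) (snd i) (f (fst i) (snd i))))"
  using fin sub
proof (induction I rule: finite_induct)
  case empty
  then show ?case using char_zero[OF S m] by simp
next
  case (insert j I)
  obtain n0 x0 where j: "j = (n0, x0)" by (cases j)
  have x0: "x0 \<in> K n0" using insert.prems j by auto
  have fx: "f n0 x0 \<in> G (n0 - p)" by (rule cochainsD(1)[OF f x0])
  have u: "upper_elem n0 x0 (f n0 x0) \<in> cochains K G p" by (rule upper_in[OF S x0 fx])
  have eq: "(\<lambda>n x. if (n, x) \<in> insert j I then f n x else 0)
     = (\<lambda>n x. (if (n, x) \<in> I then f n x else 0) + upper_elem n0 x0 (f n0 x0) n x)"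
    using insert.hyps j unfolding upper_elem_def by (auto simp: fun_eq_iff)
  show ?case unfolding eq
    using char_mult[OF m restr_in[OF S f] u] insert by (simp add: j mult.commute)
qed

lemma char_decomp:
  assumes S: "setting K dC G dG" and m: "m \<in> chars K G p" and f: "f \<in> cochains K G p"
  shows "m f = (\<Prod>i\<in>{(n, x). x \<in> K n}. m (upper_elem (fst i) (snd i) (f (fst i) (snd i))))"
proof -
  have "(\<lambda>n x. if (n, x) \<in> {(n, x). x \<in> K n} then f n x else 0) = f"
    using f by (auto simp: fun_eq_iff dest: cochainsD(2))
  then show ?thesis using char_decomp_ind[OF S m f S_finite[OF S] order_refl] by simp
qed

definition PsiC :: "(int \<Rightarrow> 'k set) \<Rightarrow> (int \<Rightarrow> 'g::ab_group_add set) \<Rightarrow> int \<Rightarrow>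
   (int \<times> 'k \<Rightarrow> 'g \<Rightarrow> complex) \<Rightarrow> (('k,'g) cochain \<Rightarrow> complex)" where
  "PsiC K G p R = (\<lambda>f. if f \<in> cochains K G p then (\<Prod>i\<in>{(n, x). x \<in> K n}. R i (f (fst i) (snd i))) else 1)"

lemma PsiC_char:
  assumes S: "setting K dC G dG" and R: "R \<in> PiE {(n, x). x \<in> K n} (\<lambda>i. dual_grp G (fst i - p))"
  shows "PsiC K G p R \<in> chars K G p"
proof -
  let ?S = "{(n, x). x \<in> K n}"
  have Ri: "R i \<in> dual_grp G (fst i - p)" if "i \<in> ?S" for i using PiE_mem[OF R that] .
  have A: "cmod (PsiC K G p R f) = 1" if f: "f \<in> cochains K G p" for f
  proof -
    have "cmod (\<Prod>i\<in>?S. R i (f (fst i) (snd i))) = (\<Prod>i\<in>?S. cmod (R i (f (fst i) (snd i))))"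
      by (simp add: prod_norm)
    also have "\<dots> = 1"
    proof (rule prod.neutral, rule ballI)
      fix i assume i: "i \<in> ?S"
      obtain a b where ab: "i = (a, b)" by (cases i)
      have "b \<in> K a" using i ab by simp
      then show "cmod (R i (f (fst i) (snd i))) = 1"
        using dual_norm[OF Ri[OF i] cochainsD(1)[OF f]] ab by simp
    qed
    finally show ?thesis using f unfolding PsiC_def by simp
  qed
  have B: "PsiC K G p R (\<lambda>n x. f n x + g n x) = PsiC K G p R f * PsiC K G p R g"
    if f: "f \<in> cochains K G p" and g: "g \<in> cochains K G p" for f g
  proof -
    have fg: "(\<lambda>n x. f n x + g n x) \<in> cochains K G p" by (rule cochains_add[OF S f g])
    have "(\<Prod>i\<in>?S. R i (f (fst i) (snd i) + g (fst i) (snd i)))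
        = (\<Prod>i\<in>?S. R i (f (fst i) (snd i)) * R i (g (fst i) (snd i)))"
    proof (rule prod.cong[OF refl])
      fix i assume i: "i \<in> ?S"
      obtain a b where ab: "i = (a, b)" by (cases i)
      have "b \<in> K a" using i ab by simp
      then show "R i (f (fst i) (snd i) + g (fst i) (snd i))
        = R i (f (fst i) (snd i)) * R i (g (fst i) (snd i))"
        using dual_mult[OF Ri[OF i] cochainsD(1)[OF f] cochainsD(1)[OF g]] ab by simp
    qed
    then show ?thesis using f g fg unfolding PsiC_def by (simp add: prod.distrib)
  qed
  have C: "PsiC K G p R f = 1" if "f \<notin> cochains K G p" for f
    using that unfolding PsiC_def by simp
  show ?thesis unfolding chars_def using A B C by blast
qed

lemma PsiC_upper:
  assumes S: "setting K dC G dG" and R: "R \<in> PiE {(n, x). x \<in> K n} (\<lambda>i. dual_grp G (fst i - p))"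
    and x: "x \<in> K n" and g: "g \<in> G (n - p)"
  shows "PsiC K G p R (upper_elem n x g) = R (n, x) g"
proof -
  let ?S = "{(n, x). x \<in> K n}"
  have Ri: "R i \<in> dual_grp G (fst i - p)" if "i \<in> ?S" for i using PiE_mem[OF R that] .
  have u: "upper_elem n x g \<in> cochains K G p" by (rule upper_in[OF S x g])
  have nx: "(n, x) \<in> ?S" using x by simp
  have P1: "(\<Prod>i\<in>?S. R i (upper_elem n x g (fst i) (snd i)))
      = R (n, x) (upper_elem n x g n x) * (\<Prod>i\<in>?S - {(n, x)}. R i (upper_elem n x g (fst i) (snd i)))"
    by (subst prod.remove[OF S_finite[OF S] nx]) simp
  have P2: "(\<Prod>i\<in>?S - {(n, x)}. R i (upper_elem n x g (fst i) (snd i))) = 1"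
  proof (rule prod.neutral, rule ballI)
    fix i assume i: "i \<in> ?S - {(n, x)}"
    obtain a b where ab: "i = (a, b)" by (cases i)
    have "upper_elem n x g a b = 0" using i ab unfolding upper_elem_def by auto
    then show "R i (upper_elem n x g (fst i) (snd i)) = 1"
      using dual_zero[OF S Ri[of i]] i ab by simp
  qed
  show ?thesis using P1 P2 u unfolding PsiC_def by (simp add: upper_elem_def)
qed

lemma PsiC_bij:
  assumes S: "setting K dC G dG"
  shows "bij_betw (PsiC K G p) (PiE {(n, x). x \<in> K n} (\<lambda>i. dual_grp G (fst i - p))) (chars K G p)"
  unfolding bij_betw_def
proof (intro conjI)
  let ?S = "{(n, x). x \<in> K n}"
  let ?P = "PiE ?S (\<lambda>i. dual_grp G (fst i - p))"
  show "inj_on (PsiC K G p) ?P"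
  proof (rule inj_onI)
    fix R R' assume R: "R \<in> ?P" and R': "R' \<in> ?P" and eq: "PsiC K G p R = PsiC K G p R'"
    show "R = R'"
    proof (rule PiE_ext[OF R R'])
      fix i assume i: "i \<in> ?S"
      obtain n x where nx: "i = (n, x)" by (cases i)
      have x: "x \<in> K n" using i nx by simp
      have Ri: "R i \<in> dual_grp G (n - p)" "R' i \<in> dual_grp G (n - p)"
        using PiE_mem[OF R i] PiE_mem[OF R' i] nx by auto
      show "R i = R' i"
      proof (rule ext)
        fix g show "R i g = R' i g"
        proof (cases "g \<in> G (n - p)")
          case True
          then show ?thesis using PsiC_upper[OF S R x True] PsiC_upper[OF S R' x True] eq nx by simp
        next
          case False
          then show ?thesis using dual_out[OF Ri(1) False] dual_out[OF Ri(2) False] by simp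
        qed
      qed
    qed
  qed
  show "PsiC K G p ` ?P = chars K G p"
  proof (intro equalityI subsetI)
    fix m assume "m \<in> PsiC K G p ` ?P" then show "m \<in> chars K G p" using PsiC_char[OF S] by blast
  next
    fix m assume m: "m \<in> chars K G p"
    let ?R = "\<lambda>i\<in>?S. \<lambda>g. if g \<in> G (fst i - p) then m (upper_elem (fst i) (snd i) g) else 1"
    have RP: "?R \<in> ?P"
    proof (rule PiE_I)
      fix i assume i: "i \<in> ?S"
      obtain n x where nx: "i = (n, x)" by (cases i)
      have x: "x \<in> K n" using i nx by simp
      show "?R i \<in> dual_grp G (fst i - p)"
        unfolding dual_grp_def nx
      proof (intro CollectI conjI ballI allI impI)
        fix g assume g: "g \<in> G (fst (n, x) - p)"
        then show "cmod (?R (n, x) g) = 1"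
          using x char_norm[OF m upper_in[OF S x]] by simp
        fix h assume h: "h \<in> G (fst (n, x) - p)"
        have gh: "g + h \<in> G (n - p)" using g h setting_facts(5)[OF S] by simp
        have "upper_elem n x (g + h) = (\<lambda>n' x'. upper_elem n x g n' x' + upper_elem n x h n' x')"
          unfolding upper_elem_def by (auto simp: fun_eq_iff)
        then show "?R (n, x) (g + h) = ?R (n, x) g * ?R (n, x) h"
          using x g h gh char_mult[OF m upper_in[OF S x] upper_in[OF S x]] by simp
      next
        fix g assume "g \<notin> G (fst (n, x) - p)"
        then show "?R (n, x) g = 1" using x by simp
      qed
    next
      fix i assume "i \<notin> ?S" then show "?R i = undefined" by simp
    qed
    have PR: "PsiC K G p ?R = m"
    proof (rule ext)
      fix f show "PsiC K G p ?R f = m f"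
      proof (cases "f \<in> cochains K G p")
        case True
        have "(\<Prod>i\<in>?S. ?R i (f (fst i) (snd i))) = (\<Prod>i\<in>?S. m (upper_elem (fst i) (snd i) (f (fst i) (snd i))))"
        proof (rule prod.cong[OF refl])
          fix i assume i: "i \<in> ?S"
          obtain a b where ab: "i = (a, b)" by (cases i)
          have "b \<in> K a" using i ab by simp
          then have "f a b \<in> G (a - p)" by (rule cochainsD(1)[OF True])
          then show "?R i (f (fst i) (snd i)) = m (upper_elem (fst i) (snd i) (f (fst i) (snd i)))"
            using i ab by simp
        qed
        then show ?thesis using True char_decomp[OF S m True] unfolding PsiC_def by simp
      next
        case False
        then show ?thesis using char_out[OF m] unfolding PsiC_def by simp
      qed
    qed
    show "m \<in> PsiC K G p ` ?P"
    proof (rule image_eqI[where x = "?R"])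
      show "m = PsiC K G p ?R" using PR by simp
    qed (rule RP)
  qed
qed

lemma core:
  assumes S: "setting K dC G dG" and u: "u \<in> cochains K G p" and v: "v \<in> cochains K G p"
  shows "(\<Sum>m\<in>chars K G p. m v * m u)
       = (\<Prod>(n, x)\<in>{(n, x). x \<in> K n}. \<Sum>r\<in>dual_grp G (n - p). r (v n x) * r (u n x))"
proof -
  let ?S = "{(n, x). x \<in> K n}"
  let ?D = "\<lambda>i. dual_grp G (fst i - p)"
  have "(\<Sum>m\<in>chars K G p. m v * m u) = (\<Sum>R\<in>PiE ?S ?D. PsiC K G p R v * PsiC K G p R u)"
    by (rule sum.reindex_bij_betw[OF PsiC_bij[OF S], symmetric])
  also have "\<dots> = (\<Sum>R\<in>PiE ?S ?D. \<Prod>i\<in>?S. R i (v (fst i) (snd i)) * R i (u (fst i) (snd i)))"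
    using u v unfolding PsiC_def by (simp add: prod.distrib)
  also have "\<dots> = (\<Prod>i\<in>?S. \<Sum>r\<in>?D i. r (v (fst i) (snd i)) * r (u (fst i) (snd i)))"
    by (rule prod_sum_PiE[symmetric]) (simp_all add: S_finite[OF S] dual_finite[OF S])
  also have "\<dots> = (\<Prod>(n, x)\<in>?S. \<Sum>r\<in>dual_grp G (n - p). r (v n x) * r (u n x))"
    by (simp add: case_prod_unfold)
  finally show ?thesis .
qed


theorem proposition12:
  fixes K :: "int \<Rightarrow> 'k set" and dC :: "int \<Rightarrow> 'k \<Rightarrow> 'k \<Rightarrow> int"
    and G :: "int \<Rightarrow> 'g::ab_group_add set" and dG :: "int \<Rightarrow> 'g \<Rightarrow> 'g"
    and s :: "('k,'g) cochain \<Rightarrow> complex" and v :: "('k,'g) cochain"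
  assumes "setting K dC G dG"
    and "s \<in> chars K G (-1)"
    and "v \<in> cochains K G 1"
  shows "(\<forall>\<psi>\<in>Hspace K G.
           op_sum (cochains K G (-1)) (\<lambda>t. s t) (Aop K dC dG) \<psi>
         = op_prod {(n, x). x \<in> K n}
             (\<lambda>(n, x). op_sum (G (n + 1)) (\<lambda>g. s (upper_elem n x g))
                                 (\<lambda>g. Aop K dC dG (upper_elem n x g))) \<psi>)
    \<and> (\<forall>\<psi>\<in>Hspace K G.
           op_sum (chars K G 1) (\<lambda>m. m v) (Bop K dC G dG) \<psi>
         = op_prod {(n, x). x \<in> K n}
             (\<lambda>(n, x). op_sum (dual_grp G (n - 1)) (\<lambda>r. lower_elem K G 1 n x r v)
                                 (\<lambda>r. Bop K dC G dG (lower_elem K G 1 n x r))) \<psi>)"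
proof (intro conjI ballI)
  note S = assms(1)
  let ?S = "{(n, x). x \<in> K n}"
  fix \<psi> :: "('k,'g) vec"
  have "op_sum (cochains K G (-1)) (\<lambda>t. s t) (Aop K dC dG) \<psi>
      = (\<lambda>f. \<Sum>t\<in>CI K G (-1) ?S. s t * \<psi> (\<lambda>n x. f n x - cobdry K dC dG (-1) t n x))"
    unfolding CI_full by (simp add: op_sum_def Aop_def Pop_def)
  also have "\<dots> = op_prod ?S
             (\<lambda>(n, x). op_sum (G (n + 1)) (\<lambda>g. s (upper_elem n x g))
                                 (\<lambda>g. Aop K dC dG (upper_elem n x g))) \<psi>"
    by (rule part1_ind[OF S assms(2) S_finite[OF S] order_refl, symmetric])
  finally show "op_sum (cochains K G (-1)) (\<lambda>t. s t) (Aop K dC dG) \<psi>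
         = op_prod ?S
             (\<lambda>(n, x). op_sum (G (n + 1)) (\<lambda>g. s (upper_elem n x g))
                                 (\<lambda>g. Aop K dC dG (upper_elem n x g))) \<psi>" .
next
  note S = assms(1)
  let ?S = "{(n, x). x \<in> K n}"
  fix \<psi> :: "('k,'g) vec" assume \<psi>: "\<psi> \<in> Hspace K G"
  let ?k = "\<lambda>i f. case i of (n, x) \<Rightarrow> \<Sum>r\<in>dual_grp G (n - 1).
      lower_elem K G 1 n x r v * dual_cobdry K dC G dG (lower_elem K G 1 n x r) f"
  have Bop_eq: "Bop K dC G dG = (\<lambda>m. Qop (dual_cobdry K dC G dG m))" by (rule ext) (simp add: Bop_def)
  have R: "op_prod ?S (\<lambda>(n, x). op_sum (dual_grp G (n - 1)) (\<lambda>r. lower_elem K G 1 n x r v)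
                                 (\<lambda>r. Bop K dC G dG (lower_elem K G 1 n x r))) \<psi>
      = (\<lambda>f. (\<Prod>i\<in>?S. ?k i f) * \<psi> f)"
  proof (rule qprod[OF _ S_finite[OF S]])
    fix i and \<phi> :: "('k,'g) vec"
    show "(\<lambda>(n, x). op_sum (dual_grp G (n - 1)) (\<lambda>r. lower_elem K G 1 n x r v)
                                 (\<lambda>r. Bop K dC G dG (lower_elem K G 1 n x r))) i \<phi> = (\<lambda>f. ?k i f * \<phi> f)"
      by (cases i) (simp add: Bop_eq qsum)
  qed
  have L: "op_sum (chars K G 1) (\<lambda>m. m v) (Bop K dC G dG) \<psi>
      = (\<lambda>f. (\<Sum>m\<in>chars K G 1. m v * dual_cobdry K dC G dG m f) * \<psi> f)"
    by (simp add: Bop_eq qsum)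
  show "op_sum (chars K G 1) (\<lambda>m. m v) (Bop K dC G dG) \<psi>
      = op_prod ?S (\<lambda>(n, x). op_sum (dual_grp G (n - 1)) (\<lambda>r. lower_elem K G 1 n x r v)
                                 (\<lambda>r. Bop K dC G dG (lower_elem K G 1 n x r))) \<psi>"
    unfolding L R
  proof (rule ext)
    fix f
    show "(\<Sum>m\<in>chars K G 1. m v * dual_cobdry K dC G dG m f) * \<psi> f = (\<Prod>i\<in>?S. ?k i f) * \<psi> f"
    proof (cases "f \<in> cochains K G 0")
      case False
      then have "\<psi> f = 0" using \<psi> unfolding Hspace_def by blast
      then show ?thesis by simp
    next
      case True
      let ?u = "cobdry K dC dG 0 f"
      have u: "?u \<in> cochains K G 1" by (rule cobdry_in[OF S True])
      have "(\<Sum>m\<in>chars K G 1. m v * dual_cobdry K dC G dG m f) = (\<Sum>m\<in>chars K G 1. m v * m ?u)"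
        using True unfolding dual_cobdry_def by simp
      also have "\<dots> = (\<Prod>(n, x)\<in>?S. \<Sum>r\<in>dual_grp G (n - 1). r (v n x) * r (?u n x))"
        by (rule core[OF S u assms(3)])
      also have "\<dots> = (\<Prod>i\<in>?S. ?k i f)"
      proof (rule prod.cong[OF refl])
        fix i assume i: "i \<in> ?S"
        obtain n x where nx: "i = (n, x)" by (cases i)
        show "(case i of (n, x) \<Rightarrow> \<Sum>r\<in>dual_grp G (n - 1). r (v n x) * r (?u n x)) = ?k i f"
          using True u assms(3) unfolding nx lower_elem_def dual_cobdry_def by simp
      qed
      finally show ?thesis by simp
    qed
  qed
qed

end
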